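(* There exists an anonymous hedonic game with exactly $n=15$ agents in which every agent has strict and generally single-peaked preferences over coalition sizes, and which admits no individually stable partition.
   Context: A hedonic game on agent set $N=[n]$ assigns to each agent $i$ a weak order $\succsim_i$ over the coalitions (subsets of $N$) containing $i$; a partition $\pi$ of $N$ is evaluated by agent $i$ via the coalition $\pi(i)$ containing $i$. In an anonymous hedonic game (AHG), each agent $i$ has a weak order $\succsim_i^S$ over sizes $\{1,\dots,n\}$ and $\pi(i)\succsim_i\pi'(i)$ iff $|\pi(i)|\succsim_i^S|\pi'(i)|$. Preferences are strict if these orders are linear. An AHG is generally single-peaked if there is a linear order $>$ on $[n]$ such that for every agent $i$ and all $x,y,z\in[n]$ with $x>y>z$ or $z>y>x$, $x\succ_i^S y$ implies $y\succsim_i^S z$. An IS (individually stable) deviation of agent $i$ from partition $\pi$ to partition $\pi'$ is a move of $i$ alone from $\pi(i)$ into another coalition of $\pi$ or into a new singleton (all other agents keep their coalitions apart from $i$) such that $\pi'(i)\succ_i\pi(i)$ and $\pi'(j)\succsim_j\pi(j)$ for every $j\in\pi'(i)\setminus\{i\}$. A partition is individually stable (IS) if no IS deviation is possible from it. *)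

theory Defs
  imports Main "HOL-Library.Disjoint_Sets"
begin

(* Agents are 1..n.  pref i x y  means  x \<succeq>_i^S y  (agent i weakly prefers size x to size y). *)

definition agents :: "nat \<Rightarrow> nat set" where
  "agents n = {1..n}"

definition strict_pref :: "(nat \<Rightarrow> nat \<Rightarrow> nat \<Rightarrow> bool) \<Rightarrow> nat \<Rightarrow> nat \<Rightarrow> nat \<Rightarrow> bool" where
  "strict_pref pref i x y \<longleftrightarrow> pref i x y \<and> \<not> pref i y x"

definition is_AHG :: "nat \<Rightarrow> (nat \<Rightarrow> nat \<Rightarrow> nat \<Rightarrow> bool) \<Rightarrow> bool" where
  "is_AHG n pref \<longleftrightarrow> (\<forall>i\<in>agents n.
      (\<forall>x\<in>{1..n}. pref i x x) \<and>
      (\<forall>x\<in>{1..n}. \<forall>y\<in>{1..n}. pref i x y \<or> pref i y x) \<and>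
      (\<forall>x\<in>{1..n}. \<forall>y\<in>{1..n}. \<forall>z\<in>{1..n}. pref i x y \<longrightarrow> pref i y z \<longrightarrow> pref i x z))"

definition strict_prefs :: "nat \<Rightarrow> (nat \<Rightarrow> nat \<Rightarrow> nat \<Rightarrow> bool) \<Rightarrow> bool" where
  "strict_prefs n pref \<longleftrightarrow> (\<forall>i\<in>agents n. \<forall>x\<in>{1..n}. \<forall>y\<in>{1..n}.
      pref i x y \<longrightarrow> pref i y x \<longrightarrow> x = y)"

definition gen_single_peaked :: "nat \<Rightarrow> (nat \<Rightarrow> nat \<Rightarrow> nat \<Rightarrow> bool) \<Rightarrow> bool" where
  "gen_single_peaked n pref \<longleftrightarrow> (\<exists>gt :: nat \<Rightarrow> nat \<Rightarrow> bool.
      (\<forall>x\<in>{1..n}. \<not> gt x x) \<and>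
      (\<forall>x\<in>{1..n}. \<forall>y\<in>{1..n}. x \<noteq> y \<longrightarrow> gt x y \<or> gt y x) \<and>
      (\<forall>x\<in>{1..n}. \<forall>y\<in>{1..n}. \<forall>z\<in>{1..n}. gt x y \<longrightarrow> gt y z \<longrightarrow> gt x z) \<and>
      (\<forall>i\<in>agents n. \<forall>x\<in>{1..n}. \<forall>y\<in>{1..n}. \<forall>z\<in>{1..n}.
          ((gt x y \<and> gt y z) \<or> (gt z y \<and> gt y x)) \<longrightarrow>
          strict_pref pref i x y \<longrightarrow> pref i y z))"

definition coal :: "nat set set \<Rightarrow> nat \<Rightarrow> nat set" where
  "coal P i = (THE C. C \<in> P \<and> i \<in> C)"

(* IS deviation of agent i from partition P: i joins a coalition C of P not containing i,
   or C = {} (new singleton). *)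
definition IS_deviation :: "nat \<Rightarrow> (nat \<Rightarrow> nat \<Rightarrow> nat \<Rightarrow> bool) \<Rightarrow> nat set set \<Rightarrow> nat \<Rightarrow> bool" where
  "IS_deviation n pref P i \<longleftrightarrow> i \<in> agents n \<and>
     (\<exists>C \<in> P \<union> {{}}. i \<notin> C \<and>
        strict_pref pref i (card C + 1) (card (coal P i)) \<and>
        (\<forall>j\<in>C. pref j (card C + 1) (card C)))"

definition individually_stable :: "nat \<Rightarrow> (nat \<Rightarrow> nat \<Rightarrow> nat \<Rightarrow> bool) \<Rightarrow> nat set set \<Rightarrow> bool" where
  "individually_stable n pref P \<longleftrightarrow>
     partition_on (agents n) P \<and> \<not> (\<exists>i. IS_deviation n pref P i)"

end

theory Submission
  imports Defs
begin



definition rkA :: "nat \<Rightarrow> nat" where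
  "rkA x = (if x = 3 then 0 else if x = 2 then 1 else if x = 1 then 2 else if x = 14 then 3
            else if x = 15 then 4 else 18 - x)"
definition rkB :: "nat \<Rightarrow> nat" where
  "rkB x = (if x = 13 then 0 else if x = 3 then 1 else if x = 2 then 2 else if x = 1 then 3
            else if x = 14 then 13 else if x = 15 then 14 else 16 - x)"
definition rkC :: "nat \<Rightarrow> nat" where
  "rkC x = (if x = 2 then 0 else if x = 3 then 1 else if x = 13 then 2 else if x = 12 then 3
            else if x = 1 then 4 else if x = 14 then 13 else if x = 15 then 14 else 16 - x)"
definition rkE :: "nat \<Rightarrow> nat" where
  "rkE x = (if x \<le> 13 then 13 - x else x - 1)"
definition axpos :: "nat \<Rightarrow> nat" where
  "axpos x = (if x = 3 then 10 else if x = 2 then 11 else if x = 1 then 12 else if x = 14 then 13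
              else if x = 15 then 14 else x - 4)"

definition rk :: "nat \<Rightarrow> nat \<Rightarrow> nat" where
  "rk i = (if i \<le> 2 then rkA else if i = 3 then rkC else if i = 4 then rkB else rkE)"

definition prefX :: "nat \<Rightarrow> nat \<Rightarrow> nat \<Rightarrow> bool" where
  "prefX i x y \<longleftrightarrow> rk i x \<le> rk i y"

lemma set15: "{1..15::nat} = {1,2,3,4,5,6,7,8,9,10,11,12,13,14,15}" by (rule set_eqI, simp, presburger)

lemma rk_cases: "rk i = rkA \<or> rk i = rkB \<or> rk i = rkC \<or> rk i = rkE"
  unfolding rk_def by auto

lemma inj_f:
  assumes "f = rkA \<or> f = rkB \<or> f = rkC \<or> f = rkE"
  shows "\<forall>x\<in>{1..15::nat}. \<forall>y\<in>{1..15}. f x = f y \<longrightarrow> x = y"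
  using assms unfolding set15 by (elim disjE; simp add: rkA_def rkB_def rkC_def rkE_def)

lemma inj_pos: "\<forall>x\<in>{1..15::nat}. \<forall>y\<in>{1..15}. axpos x = axpos y \<longrightarrow> x = y"
  unfolding set15 by (simp add: axpos_def)

lemma sp_f:
  assumes "f = rkA \<or> f = rkB \<or> f = rkC \<or> f = rkE"
  shows "\<forall>x\<in>{1..15::nat}. \<forall>y\<in>{1..15}. \<forall>z\<in>{1..15}.
     ((axpos x > axpos y \<and> axpos y > axpos z) \<or> (axpos z > axpos y \<and> axpos y > axpos x)) \<longrightarrow>
     f x < f y \<longrightarrow> f y \<le> f z"
  using assms unfolding set15 by (elim disjE; simp add: rkA_def rkB_def rkC_def rkE_def axpos_def)




lemma ahg: "is_AHG 15 prefX" unfolding is_AHG_def prefX_def by auto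

lemma strict: "strict_prefs 15 prefX"
  unfolding strict_prefs_def prefX_def agents_def
proof (intro ballI impI)
  fix i x y assume x: "x \<in> {1..15::nat}" and y: "y \<in> {1..15::nat}" and "rk i x \<le> rk i y" "rk i y \<le> rk i x"
  then have "rk i x = rk i y" by simp
  then show "x = y" using inj_f[OF rk_cases[of i]] x y by blast
qed

lemma gsp: "gen_single_peaked 15 prefX"
  unfolding gen_single_peaked_def
proof (rule exI[of _ "\<lambda>x y. axpos x > axpos y"], intro conjI)
  show "\<forall>x\<in>{1..15}. \<not> axpos x > axpos x" by simp
  show "\<forall>x\<in>{1..15}. \<forall>y\<in>{1..15}. x \<noteq> y \<longrightarrow> axpos x > axpos y \<or> axpos y > axpos x"
    using inj_pos by (metis nat_neq_iff)
  show "\<forall>x\<in>{1..15}. \<forall>y\<in>{1..15}. \<forall>z\<in>{1..15}. axpos x > axpos y \<longrightarrow> axpos y > axpos z \<longrightarrow> axpos x > axpos z"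
    by simp
  show "\<forall>i\<in>agents 15. \<forall>x\<in>{1..15}. \<forall>y\<in>{1..15}. \<forall>z\<in>{1..15}.
       (axpos x > axpos y \<and> axpos y > axpos z \<or> axpos z > axpos y \<and> axpos y > axpos x) \<longrightarrow>
       strict_pref prefX i x y \<longrightarrow> prefX i y z"
  proof (intro ballI impI)
    fix i x y z assume x: "x \<in> {1..15::nat}" and y: "y \<in> {1..15::nat}" and z: "z \<in> {1..15::nat}"
      and b: "axpos x > axpos y \<and> axpos y > axpos z \<or> axpos z > axpos y \<and> axpos y > axpos x"
      and sp: "strict_pref prefX i x y"
    from sp have "rk i x < rk i y" unfolding strict_pref_def prefX_def by auto
    then have "rk i y \<le> rk i z" using sp_f[OF rk_cases[of i]] x y z b by blast
    then show "prefX i y z" unfolding prefX_def .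
  qed
qed




lemma rkA_acc: "m \<in> {1..15} \<Longrightarrow> rkA m \<le> rkA 1 \<Longrightarrow> m \<le> 3"
  unfolding set15 by (auto simp: rkA_def)
lemma rkB_acc: "m \<in> {1..15} \<Longrightarrow> rkB m \<le> rkB 1 \<Longrightarrow> m \<le> 3 \<or> m = 13"
  unfolding set15 by (auto simp: rkB_def)
lemma rkC_acc: "m \<in> {1..15} \<Longrightarrow> rkC m \<le> rkC 1 \<Longrightarrow> m \<le> 3 \<or> m = 12 \<or> m = 13"
  unfolding set15 by (auto simp: rkC_def)
lemma rkE_acc: "m \<in> {1..15} \<Longrightarrow> rkE m \<le> rkE 1 \<Longrightarrow> m \<le> 13"
  unfolding set15 by (auto simp: rkE_def)
lemma rkA_cl: "m \<in> {1..3} \<Longrightarrow> rkA (m+1) > rkA m \<Longrightarrow> m = 3"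
  by (subgoal_tac "m = 1 \<or> m = 2 \<or> m = 3", elim disjE, auto simp: rkA_def)
lemma rkB_cl: "m \<in> {1..3} \<Longrightarrow> rkB (m+1) > rkB m \<Longrightarrow> m = 3"
  by (subgoal_tac "m = 1 \<or> m = 2 \<or> m = 3", elim disjE, auto simp: rkB_def)
lemma rkC_cl: "m \<in> {1..3} \<or> m = 12 \<Longrightarrow> rkC (m+1) > rkC m \<Longrightarrow> m = 2 \<or> m = 3"
  by (subgoal_tac "m = 1 \<or> m = 2 \<or> m = 3 \<or> m = 12", elim disjE, auto simp: rkC_def)
lemma rkE_cl: "m \<le> 12 \<Longrightarrow> rkE (m+1) \<le> rkE m"
  by (auto simp: rkE_def)

lemma rk_small: "k \<in> {1,2,4} \<Longrightarrow> rk k 2 < rk k 1 \<and> rk k 3 < rk k 2"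
  by (auto simp: rk_def rkA_def rkB_def)

locale ISP =
  fixes P :: "nat set set"
  assumes part: "partition_on {1..15} P"
    and nodev: "\<not> (\<exists>i. IS_deviation 15 prefX P i)"
begin

lemma P_sub: "C \<in> P \<Longrightarrow> C \<subseteq> {1..15}"
  using part unfolding partition_on_def by auto
lemma P_ne: "C \<in> P \<Longrightarrow> C \<noteq> {}"
  using part unfolding partition_on_def by auto
lemma P_fin: "C \<in> P \<Longrightarrow> finite C"
  using P_sub finite_subset by blast
lemma P_disj: "C \<in> P \<Longrightarrow> D \<in> P \<Longrightarrow> C \<noteq> D \<Longrightarrow> C \<inter> D = {}"
  using part unfolding partition_on_def disjoint_def by auto

lemma coal_eq: "C \<in> P \<Longrightarrow> i \<in> C \<Longrightarrow> coal P i = C"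
  unfolding coal_def
  by (rule the_equality) (auto dest: P_disj)

lemma coal_mem: "i \<in> {1..15} \<Longrightarrow> coal P i \<in> P \<and> i \<in> coal P i"
proof -
  assume "i \<in> {1..15}"
  then have "i \<in> \<Union>P" by (simp add: partition_onD1[OF part, symmetric])
  then obtain C where "C \<in> P" "i \<in> C" by blast
  then show ?thesis using coal_eq by simp
qed

lemma coal_in: "i \<in> {1..15} \<Longrightarrow> i \<in> coal P i" using coal_mem by blast
lemma coal_P: "i \<in> {1..15} \<Longrightarrow> coal P i \<in> P" using coal_mem by blast

lemma card_15: "C \<in> P \<Longrightarrow> card C \<le> 15"
proof -
  assume "C \<in> P"
  then have "card C \<le> card {1..15::nat}" using P_sub by (intro card_mono) auto
  then show ?thesis by simp
qed
lemma card_pos: "C \<in> P \<Longrightarrow> 1 \<le> card C"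
  using P_ne P_fin by (simp add: Suc_le_eq card_gt_0_iff)

lemma s_range: "i \<in> {1..15} \<Longrightarrow> card (coal P i) \<in> {1..15}"
  using card_15 card_pos coal_P by auto

lemma dev:
  assumes i: "i \<in> {1..15}" and C: "C \<in> P" and iC: "i \<notin> C"
    and better: "rk i (card C + 1) < rk i (card (coal P i))"
    and cons: "\<And>j. j \<in> C \<Longrightarrow> rk j (card C + 1) \<le> rk j (card C)"
  shows False
proof -
  have "IS_deviation 15 prefX P i"
    unfolding IS_deviation_def agents_def strict_pref_def prefX_def
    using i C iC better cons by (intro conjI bexI[of _ C]) auto
  then show False using nodev by blast
qed

lemma ir: "i \<in> {1..15} \<Longrightarrow> rk i (card (coal P i)) \<le> rk i 1"
proof (rule ccontr)
  assume i: "i \<in> {1..15}" and "\<not> rk i (card (coal P i)) \<le> rk i 1"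
  then have "IS_deviation 15 prefX P i"
    unfolding IS_deviation_def agents_def strict_pref_def prefX_def
    by (intro conjI bexI[of _ "{}"]) auto
  then show False using nodev by blast
qed

lemma accA: "i \<in> {1,2} \<Longrightarrow> card (coal P i) \<le> 3"
  using ir[of i] s_range[of i] rkA_acc by (auto simp: rk_def)
lemma accB: "card (coal P 4) \<le> 3 \<or> card (coal P 4) = 13"
  using ir[of 4] s_range[of 4] rkB_acc by (auto simp: rk_def)
lemma accC: "card (coal P 3) \<le> 3 \<or> card (coal P 3) = 12 \<or> card (coal P 3) = 13"
  using ir[of 3] s_range[of 3] rkC_acc by (auto simp: rk_def)
lemma accE: "i \<in> {5..15} \<Longrightarrow> card (coal P i) \<le> 13"
  using ir[of i] s_range[of i] rkE_acc by (auto simp: rk_def)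

lemma acc13: "i \<in> {1..15} \<Longrightarrow> card (coal P i) \<le> 13"
proof -
  assume i: "i \<in> {1..15}"
  then consider "i \<in> {1,2}" | "i = 3" | "i = 4" | "i \<in> {5..15}" by fastforce
  then show ?thesis using accA accB accC accE by cases fastforce+
qed

end




context ISP begin

lemma coal_disj: "i \<in> {1..15} \<Longrightarrow> j \<in> {1..15} \<Longrightarrow> coal P i \<noteq> coal P j \<Longrightarrow> coal P i \<inter> coal P j = {}"
  using P_disj coal_P by blast

lemma same_coal: "i \<in> {1..15} \<Longrightarrow> j \<in> coal P i \<Longrightarrow> coal P j = coal P i"
  using coal_eq coal_P by blast

lemma no13: "k \<in> {1..15} \<Longrightarrow> card (coal P k) \<noteq> 13"
proof
  assume k: "k \<in> {1..15}" and c13: "card (coal P k) = 13"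
  define X where "X = coal P k"
  have XP: "X \<in> P" using coal_P k X_def by simp
  have cX: "card X = 13" using c13 X_def by simp
  have n1: "1 \<notin> X"
  proof
    assume "1 \<in> X" then have "coal P 1 = X" using coal_eq XP by blast
    then show False using accA[of 1] cX by simp
  qed
  have n2: "2 \<notin> X"
  proof
    assume "2 \<in> X" then have "coal P 2 = X" using coal_eq XP by blast
    then show False using accA[of 2] cX by simp
  qed
  have "X \<subseteq> {3..15}"
  proof
    fix x assume xX: "x \<in> X"
    then have "x \<in> {1..15}" "x \<noteq> 1" "x \<noteq> 2" using P_sub[OF XP] n1 n2 by auto
    then show "x \<in> {3..15}" by auto
  qed
  moreover have "card {3..15::nat} = 13" by simp
  ultimately have Xeq: "X = {3..15}" using cX by (intro card_subset_eq) auto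
  have c1: "coal P 1 \<subseteq> {1,2}"
  proof -
    have "coal P 1 \<noteq> X" using coal_in[of 1] n1 by auto
    then have "coal P 1 \<inter> X = {}" using P_disj coal_P[of 1] XP by auto
    show ?thesis
    proof
      fix x assume "x \<in> coal P 1"
      then have "x \<in> {1..15}" "x \<notin> {3..15}" using P_sub[OF coal_P[of 1]] Xeq \<open>coal P 1 \<inter> X = {}\<close> by auto
      then show "x \<in> {1,2}" by simp presburger
    qed
  qed
  have c2: "coal P 2 \<subseteq> {1,2}"
  proof -
    have "coal P 2 \<noteq> X" using coal_in[of 2] n2 by auto
    then have "coal P 2 \<inter> X = {}" using P_disj coal_P[of 2] XP by auto
    show ?thesis
    proof
      fix x assume "x \<in> coal P 2"
      then have "x \<in> {1..15}" "x \<notin> {3..15}" using P_sub[OF coal_P[of 2]] Xeq \<open>coal P 2 \<inter> X = {}\<close> by auto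
      then show "x \<in> {1,2}" by simp presburger
    qed
  qed
  have c3: "coal P 3 = X" using coal_eq XP Xeq by auto
  show False
  proof (cases "2 \<in> coal P 1")
    case True
    then have e: "coal P 1 = {1,2}" using c1 coal_in[of 1] by auto
    show False
      by (rule dev[of 3 "coal P 1"]) (use e c3 cX coal_P[of 1] in \<open>auto simp: rk_def rkA_def rkC_def\<close>)
  next
    case False
    then have e1: "coal P 1 = {1}" using c1 coal_in[of 1] by auto
    have "1 \<notin> coal P 2"
    proof
      assume "1 \<in> coal P 2" then have "coal P 1 = coal P 2" using same_coal by auto
      then show False using False coal_in[of 2] by auto
    qed
    then have e2: "coal P 2 = {2}" using c2 coal_in[of 2] by auto
    show False
      by (rule dev[of 1 "coal P 2"]) (use e1 e2 coal_P[of 2] in \<open>auto simp: rk_def rkA_def\<close>)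
  qed
qed

lemma le12: "i \<in> {1..15} \<Longrightarrow> card (coal P i) \<le> 12"
proof -
  assume i: "i \<in> {1..15}"
  have "card (coal P i) \<le> 13" "card (coal P i) \<noteq> 13" using acc13[OF i] no13[OF i] by auto
  then show ?thesis by linarith
qed

end




definition opn :: "nat set \<Rightarrow> bool" where
  "opn C \<longleftrightarrow> (\<forall>j\<in>C. rk j (card C + 1) \<le> rk j (card C))"

context ISP begin

lemma cardY12: "Y \<in> P \<Longrightarrow> card Y \<le> 12"
proof -
  assume Y: "Y \<in> P"
  then obtain j where j: "j \<in> Y" using P_ne by blast
  then have "j \<in> {1..15}" using P_sub Y by blast
  moreover have "coal P j = Y" using coal_eq Y j by blast
  ultimately show ?thesis using le12 by metis
qed

lemma closed_special:
  assumes C: "C \<in> P" and nop: "\<not> opn C"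
  shows "(card C = 2 \<or> card C = 3) \<and> (\<exists>k\<in>C. k \<in> {1..4})"
proof -
  obtain j where jC: "j \<in> C" and bad: "rk j (card C + 1) > rk j (card C)"
    using nop unfolding opn_def by (auto simp: not_le)
  have j: "j \<in> {1..15}" using P_sub C jC by blast
  have cj: "coal P j = C" using coal_eq C jC by blast
  have c1: "1 \<le> card C" using card_pos C by blast
  have c12: "card C \<le> 12" using cardY12 C by blast
  consider "j \<in> {1,2}" | "j = 3" | "j = 4" | "j \<in> {5..15}" using j by fastforce
  then show ?thesis
  proof cases
    case 1
    then have "card C \<le> 3" using accA cj by metis
    then have "card C = 3" using rkA_cl[of "card C"] bad 1 c1 by (auto simp: rk_def)
    then show ?thesis using jC 1 by (intro conjI bexI[of _ j]) auto
  next
    case 2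
    then have "card C \<le> 3 \<or> card C = 12" using accC cj c12 by fastforce
    then have "card C = 2 \<or> card C = 3" using rkC_cl[of "card C"] bad 2 c1 by (auto simp: rk_def)
    then show ?thesis using jC 2 by (intro conjI bexI[of _ j]) auto
  next
    case 3
    then have "card C \<le> 3" using accB cj c12 by fastforce
    then have "card C = 3" using rkB_cl[of "card C"] bad 3 c1 by (auto simp: rk_def)
    then show ?thesis using jC 3 by (intro conjI bexI[of _ j]) auto
  next
    case 4
    then have "rk j = rkE" by (auto simp: rk_def)
    then show ?thesis using rkE_cl[OF c12] bad by auto
  qed
qed

lemma keyK:
  assumes e: "e \<in> {5..15}" and Y: "Y \<in> P" and eY: "e \<notin> Y" and op: "opn Y"
  shows "card Y < card (coal P e)"
proof (rule ccontr)
  assume "\<not> card Y < card (coal P e)"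
  then have le: "card (coal P e) \<le> card Y" by simp
  have e15: "e \<in> {1..15}" using e by auto
  have cY: "card Y \<le> 12" using cardY12 Y by blast
  have rkEe: "rk e = rkE" using e by (auto simp: rk_def)
  show False
  proof (rule dev[OF e15 Y eY])
    show "rk e (card Y + 1) < rk e (card (coal P e))"
      using le cY unfolding rkEe rkE_def by auto
    show "\<And>j. j \<in> Y \<Longrightarrow> rk j (card Y + 1) \<le> rk j (card Y)" using op unfolding opn_def by blast
  qed
qed

end



context ISP begin

lemma allE_aux:
  assumes e1: "e1 \<in> {5..15}" and e2: "e2 \<in> {5..15}" and ne: "coal P e1 \<noteq> coal P e2"
  shows False
proof -
  have E15: "\<And>e. e \<in> {5..15::nat} \<Longrightarrow> e \<in> {1..15}" by auto
  have notin: "\<And>a b. a \<in> {1..15} \<Longrightarrow> b \<in> {1..15} \<Longrightarrow> coal P a \<noteq> coal P b \<Longrightarrow> a \<notin> coal P b"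
    using same_coal by blast
  have A: "card (coal P e) \<le> 3 \<and> (coal P e \<inter> {1..4} = {} \<longrightarrow> card (coal P e) \<le> 2)"
    if e: "e \<in> {5..15}" for e
  proof -
    obtain e' where e': "e' \<in> {5..15}" and ne': "coal P e' \<noteq> coal P e"
    proof (cases "coal P e1 = coal P e")
      case True then show ?thesis using that[of e2] e2 ne by auto
    next
      case False then show ?thesis using that[of e1] e1 by auto
    qed
    have e'Z: "e' \<notin> coal P e" using notin[OF E15[OF e'] E15[OF e]] ne' by auto
    have eZ': "e \<notin> coal P e'" using notin[OF E15[OF e] E15[OF e']] ne' by auto
    show ?thesis
    proof (cases "card (coal P e') \<le> card (coal P e)")
      case True
      have nop: "\<not> opn (coal P e)"
      proof
        assume "opn (coal P e)"
        then have "card (coal P e) < card (coal P e')" using keyK[OF e' coal_P[OF E15[OF e]] e'Z] by blast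
        then show False using True by simp
      qed
      then have "(card (coal P e) = 2 \<or> card (coal P e) = 3) \<and> (\<exists>k\<in>coal P e. k \<in> {1..4})"
        using closed_special[OF coal_P[OF E15[OF e]] nop] by blast
      then show ?thesis by auto
    next
      case False
      have nop: "\<not> opn (coal P e')"
      proof
        assume "opn (coal P e')"
        then have "card (coal P e') < card (coal P e)" using keyK[OF e coal_P[OF E15[OF e']] eZ'] by blast
        then show False using False by simp
      qed
      then have "card (coal P e') \<le> 3"
        using closed_special[OF coal_P[OF E15[OF e']] nop] by linarith
      then show ?thesis using False by simp
    qed
  qed
  have B: "coal P e = coal P e'"
    if e: "e \<in> {5..15}" and e': "e' \<in> {5..15}" and z: "coal P e \<inter> {1..4} = {}" and z': "coal P e' \<inter> {1..4} = {}" for e e'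
  proof (rule ccontr)
    assume nee: "coal P e \<noteq> coal P e'"
    have o1: "opn (coal P e)"
    proof (rule ccontr)
      assume "\<not> opn (coal P e)"
      from closed_special[OF coal_P[OF E15[OF e]] this] obtain k where "k \<in> coal P e" "k \<in> {1..4}" by blast
      with z show False by blast
    qed
    have o2: "opn (coal P e')"
    proof (rule ccontr)
      assume "\<not> opn (coal P e')"
      from closed_special[OF coal_P[OF E15[OF e']] this] obtain k where "k \<in> coal P e'" "k \<in> {1..4}" by blast
      with z' show False by blast
    qed
    have n1: "e \<notin> coal P e'" using notin[OF E15[OF e] E15[OF e']] nee by auto
    have n2: "e' \<notin> coal P e" using notin[OF E15[OF e'] E15[OF e]] nee by auto
    have "card (coal P e') < card (coal P e)"
      using keyK[OF e coal_P[OF E15[OF e']] n1 o2] .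
    moreover have "card (coal P e) < card (coal P e')"
      using keyK[OF e' coal_P[OF E15[OF e]] n2 o1] .
    ultimately show False by simp
  qed
  have C: "card (coal P k) \<le> 3" if k: "k \<in> {1..4}" for k
  proof -
    consider "k \<in> {1,2}" | "k = 3" | "k = 4" using k by fastforce
    then show ?thesis
    proof cases
      case 1 then show ?thesis using accA by blast
    next
      case 3 then show ?thesis using accB no13[of 4] by auto
    next
      case 2
      have c3: "card (coal P 3) \<le> 3 \<or> card (coal P 3) = 12" using accC no13[of 3] by auto
      show ?thesis
      proof (rule ccontr)
        assume "\<not> card (coal P k) \<le> 3"
        then have c12: "card (coal P 3) = 12" using c3 2 by auto
        show False
        proof (cases "coal P 3 \<subseteq> {1..4}")
          case True
          then have "card (coal P 3) \<le> card {1..4::nat}" by (intro card_mono) auto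
          then show False using c12 by simp
        next
          case False
          then obtain x where x: "x \<in> coal P 3" "x \<notin> {1..4}" by blast
          have x15: "x \<in> {1..15}" using x(1) P_sub[OF coal_P[of 3]] by auto
          then have x5: "x \<in> {5..15}" using x by auto
          have "coal P x = coal P 3" using same_coal x by auto
          then show False using A[OF x5] c12 by simp
        qed
      qed
    qed
  qed
  obtain Wz where Ofin: "finite Wz" and Oc: "card Wz \<le> 2"
    and Oe: "\<And>e. e \<in> {5..15} \<Longrightarrow> coal P e \<inter> {1..4} = {} \<Longrightarrow> coal P e = Wz"
  proof (cases "\<exists>e0\<in>{5..15}. coal P e0 \<inter> {1..4} = {}")
    case True
    then obtain e0 where e0: "e0 \<in> {5..15}" "coal P e0 \<inter> {1..4} = {}" by blast
    show ?thesis
    proof (rule that[of "coal P e0"])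
      show "finite (coal P e0)" using P_fin coal_P E15 e0 by blast
      show "card (coal P e0) \<le> 2" using A e0 by blast
      show "\<And>e. e \<in> {5..15} \<Longrightarrow> coal P e \<inter> {1..4} = {} \<Longrightarrow> coal P e = coal P e0"
        using B e0 by blast
    qed
  next
    case False
    then show ?thesis by (intro that[of "{}"]) auto
  qed
  let ?U = "coal P 1 \<union> coal P 2 \<union> coal P 3 \<union> coal P 4 \<union> Wz"
  have cover: "{1..15} \<subseteq> ?U"
  proof
    fix x assume x: "x \<in> {1..15::nat}"
    show "x \<in> ?U"
    proof (cases "x \<le> 4")
      case True
      then have "x = 1 \<or> x = 2 \<or> x = 3 \<or> x = 4" using x by auto
      then show ?thesis using coal_in by auto
    next
      case False
      then have x5: "x \<in> {5..15}" using x by auto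
      show ?thesis
      proof (cases "coal P x \<inter> {1..4} = {}")
        case True
        then show ?thesis using Oe[OF x5] coal_in[OF x] by auto
      next
        case False
        then obtain k where k: "k \<in> coal P x" "k \<in> {1..4}" by blast
        then have "coal P k = coal P x" using same_coal x by blast
        then have "x \<in> coal P k" using coal_in x by auto
        moreover have "k = 1 \<or> k = 2 \<or> k = 3 \<or> k = 4" using k by auto
        ultimately show ?thesis by auto
      qed
    qed
  qed
  have fins: "finite (coal P 1)" "finite (coal P 2)" "finite (coal P 3)" "finite (coal P 4)"
    using P_fin coal_P by auto
  have "card {1..15::nat} \<le> card ?U" using cover fins Ofin by (intro card_mono) auto
  also have "\<dots> \<le> card (coal P 1 \<union> coal P 2 \<union> coal P 3 \<union> coal P 4) + card Wz"
    by (rule card_Un_le)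
  also have "\<dots> \<le> card (coal P 1 \<union> coal P 2 \<union> coal P 3) + card (coal P 4) + card Wz"
    using card_Un_le[of "coal P 1 \<union> coal P 2 \<union> coal P 3" "coal P 4"] by simp
  also have "\<dots> \<le> card (coal P 1 \<union> coal P 2) + card (coal P 3) + card (coal P 4) + card Wz"
    using card_Un_le[of "coal P 1 \<union> coal P 2" "coal P 3"] by simp
  also have "\<dots> \<le> card (coal P 1) + card (coal P 2) + card (coal P 3) + card (coal P 4) + card Wz"
    using card_Un_le[of "coal P 1" "coal P 2"] by simp
  also have "\<dots> \<le> 14" using C[of 1] C[of 2] C[of 3] C[of 4] Oc by simp
  finally show False by simp
qed

lemma allE: "e1 \<in> {5..15} \<Longrightarrow> e2 \<in> {5..15} \<Longrightarrow> coal P e1 = coal P e2"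
  using allE_aux by blast

end



lemma h124: "j \<in> {1..4::nat} \<Longrightarrow> j \<noteq> 3 \<Longrightarrow> j \<in> {1,2,4}"
  by simp presburger

context ISP begin

lemma sing_card: "finite C \<Longrightarrow> card C = 1 \<Longrightarrow> z \<in> C \<Longrightarrow> C = {z}"
  by (metis card_1_singletonE singletonD)

lemma final: False
proof -
  define G where "G = coal P 5"
  have GP: "G \<in> P" using coal_P G_def by simp
  have Gfin: "finite G" using P_fin GP by blast
  have EG: "{5..15} \<subseteq> G"
  proof
    fix e assume e: "e \<in> {5..15::nat}"
    then have "coal P e = G" using allE[of e 5] G_def by simp
    then show "e \<in> G" using coal_in e by fastforce
  qed
  have "card {5..15::nat} \<le> card G" using EG Gfin by (intro card_mono)
  then have G11: "11 \<le> card G" by simp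
  have G12: "card G \<le> 12" using cardY12 GP by blast
  have n124: "k \<notin> G" if k: "k \<in> {1,2,4}" for k
  proof
    assume "k \<in> G"
    then have "coal P k = G" using coal_eq GP by blast
    moreover have "card (coal P k) \<le> 3" using k accA accB no13[of 4] by auto
    ultimately show False using G11 by simp
  qed
  have GS: "G \<subseteq> {1..15}" using P_sub GP by blast
  show False
  proof (cases "3 \<in> G")
    case True
    have sub: "G \<subseteq> insert 3 {5..15}"
    proof
      fix x assume x: "x \<in> G"
      then have "x \<in> {1..15}" "x \<notin> {1,2,4}" using GS n124 by auto
      then show "x \<in> insert 3 {5..15}" by auto
    qed
    have "insert 3 {5..15} \<subseteq> G" using True EG by auto
    then have "card (insert 3 {5..15::nat}) \<le> card G" using Gfin by (intro card_mono)
    then have cG: "card G = 12" using G12 by simp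
    have c4: "card (coal P 4) \<le> 3" "1 \<le> card (coal P 4)" using accB no13[of 4] s_range[of 4] by auto
    show False
    proof (rule dev[of 4 G])
      show "4 \<in> {1..15::nat}" by simp
      show "G \<in> P" by (rule GP)
      show "4 \<notin> G" using n124 by auto
      have "card (coal P 4) = 1 \<or> card (coal P 4) = 2 \<or> card (coal P 4) = 3" using c4 by auto
      then show "rk 4 (card G + 1) < rk 4 (card (coal P 4))" using cG by (auto simp: rk_def rkB_def)
      show "\<And>j. j \<in> G \<Longrightarrow> rk j (card G + 1) \<le> rk j (card G)"
      proof -
        fix j assume "j \<in> G"
        then have "j = 3 \<or> j \<in> {5..15}" using sub by auto
        then show "rk j (card G + 1) \<le> rk j (card G)" using cG by (auto simp: rk_def rkC_def rkE_def)
      qed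
    qed
  next
    case False
    have Geq: "G = {5..15}"
    proof
      show "G \<subseteq> {5..15}"
      proof
        fix x assume x: "x \<in> G"
        then have "x \<in> {1..15}" "x \<notin> {1,2,4}" "x \<noteq> 3" using GS n124 False by auto
        then show "x \<in> {5..15}" by auto
      qed
      show "{5..15} \<subseteq> G" by (rule EG)
    qed
    then have cG: "card G = 11" by simp
    have spec: "coal P k \<subseteq> {1..4}" if k: "k \<in> {1..4}" for k
    proof
      have k15: "k \<in> {1..15}" using k by auto
      have "k \<notin> G" using Geq k by auto
      then have "coal P k \<noteq> G" using coal_in k15 by auto
      then have dj: "coal P k \<inter> G = {}" using P_disj coal_P[OF k15] GP by blast
      fix x assume "x \<in> coal P k"
      then have "x \<in> {1..15}" "x \<notin> G" using dj P_sub[OF coal_P[OF k15]] by auto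
      then show "x \<in> {1..4}" using Geq by auto
    qed
    have fin4: "finite (coal P k)" if "k \<in> {1..4}" for k using spec[OF that] finite_subset by blast
    have c3le4: "card (coal P 3) \<le> 4"
      using card_mono[OF _ spec[of 3]] by simp
    have c3ge1: "1 \<le> card (coal P 3)" using s_range[of 3] by auto
    have c3acc: "card (coal P 3) \<le> 3" using accC no13[of 3] c3le4 by auto
    have "\<not> rk 3 (card G + 1) < rk 3 (card (coal P 3))"
    proof
      assume a: "rk 3 (card G + 1) < rk 3 (card (coal P 3))"
      show False
      proof (rule dev[of 3 G])
        show "rk 3 (card G + 1) < rk 3 (card (coal P 3))" by (rule a)
        show "3 \<in> {1..15::nat}" by simp
        show "G \<in> P" by (rule GP)
        show "3 \<notin> G" by (rule False)
        show "\<And>j. j \<in> G \<Longrightarrow> rk j (card G + 1) \<le> rk j (card G)"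
          using Geq cG by (auto simp: rk_def rkE_def)
      qed
    qed
    then have "card (coal P 3) \<noteq> 1" using cG by (auto simp: rk_def rkC_def)
    then have c23: "card (coal P 3) = 2 \<or> card (coal P 3) = 3" using c3acc c3ge1 by auto
    have c3in: "coal P 3 \<in> P" "3 \<in> coal P 3" using coal_mem[of 3] by auto
    obtain y where y: "y \<in> {1,2,4}" "y \<notin> coal P 3"
    proof (rule ccontr)
      assume "\<not> thesis"
      then have "{1,2,4} \<subseteq> coal P 3" using that by blast
      then have "{1,2,3,4} \<subseteq> coal P 3" using c3in by auto
      then have "card {1,2,3,4::nat} \<le> card (coal P 3)" using fin4[of 3] by (intro card_mono) auto
      then show False using c3acc by simp
    qed
    define R where "R = {1..4} - coal P 3"
    have Rfin: "finite R" using R_def by simp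
    have cR: "card R = 4 - card (coal P 3)"
      unfolding R_def using spec[of 3] by (subst card_Diff_subset) (auto intro: finite_subset)
    have Rsub: "coal P k \<subseteq> R" if k: "k \<in> {1..4}" "k \<notin> coal P 3" for k
    proof -
      have k15: "k \<in> {1..15}" using k by auto
      have "coal P k \<noteq> coal P 3" using k coal_in[OF k15] by auto
      then have "coal P k \<inter> coal P 3 = {}" using P_disj coal_P[OF k15] c3in by blast
      then show ?thesis using spec[OF k(1)] R_def by auto
    qed
    have Rspec: "j \<in> {1,2,4}" if "j \<in> R" for j
      using that R_def c3in by (intro h124) auto
    have y15: "y \<in> {1..15}" "y \<in> {1..4}" using y by auto
    show False
    proof (cases "card (coal P 3) = 3")
      case True
      then have cR1: "card R = 1" using cR by simp
      have cy: "card (coal P y) = 1"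
        using card_mono[OF Rfin Rsub[OF y15(2) y(2)]] cR1 s_range[OF y15(1)] by auto
      have ey: "coal P y = {y}" using sing_card[OF fin4[OF y15(2)] cy coal_in[OF y15(1)]] .
      show False
      proof (rule dev[of 3 "coal P y"])
        show "3 \<in> {1..15::nat}" by simp
        show "coal P y \<in> P" using coal_P[OF y15(1)] .
        show "3 \<notin> coal P y" using ey y by auto
        show "rk 3 (card (coal P y) + 1) < rk 3 (card (coal P 3))" using cy True by (simp add: rk_def rkC_def)
        show "\<And>j. j \<in> coal P y \<Longrightarrow> rk j (card (coal P y) + 1) \<le> rk j (card (coal P y))"
        proof -
          fix j assume "j \<in> coal P y"
          then have "j = y" using ey by auto
          then show "rk j (card (coal P y) + 1) \<le> rk j (card (coal P y))" using cy rk_small[OF y(1)] by (simp add: numeral_2_eq_2 less_imp_le)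
        qed
      qed
    next
      case False
      then have c32: "card (coal P 3) = 2" using c23 by simp
      then have cR2: "card R = 2" using cR by simp
      obtain x where x: "x \<in> coal P 3" "x \<noteq> 3"
      proof (rule ccontr)
        assume "\<not> thesis"
        then have "coal P 3 \<subseteq> {3}" using that by blast
        then have "card (coal P 3) \<le> card {3::nat}" by (intro card_mono) auto
        then show False using c32 by simp
      qed
      have x4: "x \<in> {1,2,4}" using x spec[of 3] by (intro h124) auto
      have x15: "x \<in> {1..15}" using x4 by auto
      have cx: "coal P x = coal P 3" using same_coal x by auto
      have cy12: "card (coal P y) = 1 \<or> card (coal P y) = 2"
        using card_mono[OF Rfin Rsub[OF y15(2) y(2)]] cR2 s_range[OF y15(1)] by auto
      show False
      proof (cases "card (coal P y) = 2")
        case True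
        have ey: "coal P y = R"
          using card_subset_eq[OF Rfin Rsub[OF y15(2) y(2)]] True cR2 by simp
        show False
        proof (rule dev[of x "coal P y"])
          show "x \<in> {1..15}" by (rule x15)
          show "coal P y \<in> P" using coal_P[OF y15(1)] .
          show "x \<notin> coal P y" using ey R_def x by auto
          show "rk x (card (coal P y) + 1) < rk x (card (coal P x))"
            using True cx c32 rk_small[OF x4] by simp
          show "\<And>j. j \<in> coal P y \<Longrightarrow> rk j (card (coal P y) + 1) \<le> rk j (card (coal P y))"
            using ey True Rspec rk_small by fastforce
        qed
      next
        case False
        then have cy1: "card (coal P y) = 1" using cy12 by simp
        have ey: "coal P y = {y}" using sing_card[OF fin4[OF y15(2)] cy1 coal_in[OF y15(1)]] .
        have "y \<in> R" using y R_def y15 by auto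
        have "card (R - {y}) = 1" using cR2 \<open>y \<in> R\<close> Rfin by simp
        then obtain z where z: "z \<in> R" "z \<noteq> y" by (metis Diff_iff card_1_singletonE insertI1 singletonD)
        have z4: "z \<in> {1,2,4}" using Rspec z by blast
        have z15: "z \<in> {1..15}" "z \<in> {1..4}" "z \<notin> coal P 3" using z4 z R_def by auto
        have "coal P z \<noteq> coal P y" using ey coal_in[OF z15(1)] z by auto
        then have "coal P z \<inter> coal P y = {}" using P_disj coal_P[OF z15(1)] coal_P[OF y15(1)] by blast
        then have "coal P z \<subseteq> R - {y}" using Rsub[OF z15(2) z15(3)] ey by auto
        then have "card (coal P z) \<le> 1" using card_mono[of "R - {y}" "coal P z"] Rfin \<open>card (R - {y}) = 1\<close> by simp
        then have cz1: "card (coal P z) = 1" using s_range[OF z15(1)] by auto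
        have ez: "coal P z = {z}" using sing_card[OF fin4[OF z15(2)] cz1 coal_in[OF z15(1)]] .
        show False
        proof (rule dev[of y "coal P z"])
          show "y \<in> {1..15}" by (rule y15(1))
          show "coal P z \<in> P" using coal_P[OF z15(1)] .
          show "y \<notin> coal P z" using ez z by auto
          show "rk y (card (coal P z) + 1) < rk y (card (coal P y))"
            using cz1 cy1 rk_small[OF y(1)] by (simp add: numeral_2_eq_2)
          show "\<And>j. j \<in> coal P z \<Longrightarrow> rk j (card (coal P z) + 1) \<le> rk j (card (coal P z))"
        proof -
          fix j assume "j \<in> coal P z"
          then have "j = z" using ez by auto
          then show "rk j (card (coal P z) + 1) \<le> rk j (card (coal P z))" using cz1 rk_small[OF z4] by (simp add: numeral_2_eq_2 less_imp_le)
        qed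
        qed
      qed
    qed
  qed
qed

end

theorem proposition3p1:
  shows "\<exists>pref :: nat \<Rightarrow> nat \<Rightarrow> nat \<Rightarrow> bool.
           is_AHG 15 pref \<and> strict_prefs 15 pref \<and> gen_single_peaked 15 pref \<and>
           \<not> (\<exists>P. individually_stable 15 pref P)"
proof (intro exI[of _ prefX] conjI ahg strict gsp notI)
  assume "\<exists>P. individually_stable 15 prefX P"
  then obtain P where "individually_stable 15 prefX P" by blast
  then have "ISP P" unfolding individually_stable_def agents_def by (intro ISP.intro) auto
  then show False using ISP.final by blast
qed



end
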